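(* Fix a monomial order on $S$. Let $J$ be an ideal of $S$ and $E$ a monomial ideal of $S$. Then $(J,\widehat E)$ is a G-nice pair. Moreover, if $\mathcal E^m_{J,E}\neq\emptyset$, then $\widehat E\in\mathcal E^m_{J,E}$ and $\widehat E$ is the smallest element of $\mathcal E^m_{J,E}$ with respect to inclusion.
   Context: $K$ is a field and $S=K[x_1,\ldots,x_n]$ with a fixed monomial order. For $0\neq f\in S$, $\mathrm{in}(f)$ denotes its leading monomial; for an ideal $I$, $\mathrm{in}(I)$ is the ideal generated by the leading monomials of the nonzero elements of $I$. A pair $(J,E)$ of ideals is G-nice if $\mathrm{in}(J+E)=\mathrm{in}(J)+\mathrm{in}(E)$. For an ideal $J$ and a monomial ideal $E$, $\widehat E$ (the G-nice monomial closure of $E$ with respect to $J$) is the intersection of all monomial ideals $F$ of $S$ with $E\subseteq F$ and $(J,F)$ G-nice. Also $\mathcal E^m_{J,E}$ is the set of monomial ideals $F$ of $S$ with $E\subseteq F$, $J+E=J+F$, and $(J,F)$ G-nice. *)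

theory Defs
  imports Main "HOL-Library.Poly_Mapping"
begin

(* Polynomial ring S = K[x_v : v in 'v], 'v a finite type of variables (n = CARD('v)); monomials are exponent vectors 'v =>0 nat, polynomials are finitely supported maps from monomials to K. *)

type_synonym ('v, 'k) mpoly = "('v \<Rightarrow>\<^sub>0 nat) \<Rightarrow>\<^sub>0 'k"

text \<open>Monomial order: a total order on monomials, compatible with multiplication,
  with 1 the least monomial (hence a well-order by Dickson's lemma).\<close>
definition monomial_order :: "(('v \<Rightarrow>\<^sub>0 nat) \<Rightarrow> ('v \<Rightarrow>\<^sub>0 nat) \<Rightarrow> bool) \<Rightarrow> bool" where
  "monomial_order le \<longleftrightarrow>
     (\<forall>a. le a a) \<and>
     (\<forall>a b. le a b \<and> le b a \<longrightarrow> a = b) \<and>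
     (\<forall>a b c. le a b \<and> le b c \<longrightarrow> le a c) \<and>
     (\<forall>a b. le a b \<or> le b a) \<and>
     (\<forall>a b c. le a b \<longrightarrow> le (a + c) (b + c)) \<and>
     (\<forall>a. le 0 a)"

definition is_ideal :: "('v, 'k::field) mpoly set \<Rightarrow> bool" where
  "is_ideal I \<longleftrightarrow> 0 \<in> I \<and> (\<forall>a\<in>I. \<forall>b\<in>I. a + b \<in> I) \<and> (\<forall>a\<in>I. \<forall>r. r * a \<in> I)"

definition ideal_gen :: "('v, 'k::field) mpoly set \<Rightarrow> ('v, 'k) mpoly set" where
  "ideal_gen G = \<Inter> {I. is_ideal I \<and> G \<subseteq> I}"

definition ideal_sum :: "('v, 'k::field) mpoly set \<Rightarrow> ('v, 'k) mpoly set \<Rightarrow> ('v, 'k) mpoly set" where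
  "ideal_sum I J = {a + b | a b. a \<in> I \<and> b \<in> J}"

definition is_monomial_ideal :: "('v, 'k::field) mpoly set \<Rightarrow> bool" where
  "is_monomial_ideal F \<longleftrightarrow> (\<exists>M. F = ideal_gen ((\<lambda>m. Poly_Mapping.single m 1) ` M))"

definition lead_mon :: "(('v \<Rightarrow>\<^sub>0 nat) \<Rightarrow> ('v \<Rightarrow>\<^sub>0 nat) \<Rightarrow> bool) \<Rightarrow> ('v, 'k::field) mpoly \<Rightarrow> ('v \<Rightarrow>\<^sub>0 nat)" where
  "lead_mon le f = (THE m. m \<in> Poly_Mapping.keys f \<and> (\<forall>m'\<in>Poly_Mapping.keys f. le m' m))"

definition init_ideal :: "(('v \<Rightarrow>\<^sub>0 nat) \<Rightarrow> ('v \<Rightarrow>\<^sub>0 nat) \<Rightarrow> bool) \<Rightarrow> ('v, 'k::field) mpoly set \<Rightarrow> ('v, 'k) mpoly set" where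
  "init_ideal le I = ideal_gen {Poly_Mapping.single (lead_mon le f) 1 | f. f \<in> I \<and> f \<noteq> 0}"

definition G_nice :: "(('v \<Rightarrow>\<^sub>0 nat) \<Rightarrow> ('v \<Rightarrow>\<^sub>0 nat) \<Rightarrow> bool) \<Rightarrow> ('v, 'k::field) mpoly set \<Rightarrow> ('v, 'k) mpoly set \<Rightarrow> bool" where
  "G_nice le J E \<longleftrightarrow> init_ideal le (ideal_sum J E) = ideal_sum (init_ideal le J) (init_ideal le E)"

definition Gnice_closure :: "(('v \<Rightarrow>\<^sub>0 nat) \<Rightarrow> ('v \<Rightarrow>\<^sub>0 nat) \<Rightarrow> bool) \<Rightarrow> ('v, 'k::field) mpoly set \<Rightarrow> ('v, 'k) mpoly set \<Rightarrow> ('v, 'k) mpoly set" where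
  "Gnice_closure le J E = \<Inter> {F. is_monomial_ideal F \<and> E \<subseteq> F \<and> G_nice le J F}"

definition Em_family :: "(('v \<Rightarrow>\<^sub>0 nat) \<Rightarrow> ('v \<Rightarrow>\<^sub>0 nat) \<Rightarrow> bool) \<Rightarrow> ('v, 'k::field) mpoly set \<Rightarrow> ('v, 'k) mpoly set \<Rightarrow> ('v, 'k) mpoly set set" where
  "Em_family le J E = {F. is_monomial_ideal F \<and> E \<subseteq> F \<and> ideal_sum J E = ideal_sum J F \<and> G_nice le J F}"

end

theory Submission
  imports Defs
begin

lemma ideal_gen_ideal: "is_ideal (ideal_gen G)"
  unfolding ideal_gen_def is_ideal_def by auto

lemma ideal_gen_sup: "G \<subseteq> ideal_gen G"
  unfolding ideal_gen_def by auto

lemma ideal_gen_least: "is_ideal I \<Longrightarrow> G \<subseteq> I \<Longrightarrow> ideal_gen G \<subseteq> I"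
  unfolding ideal_gen_def by auto

lemma ideal_gen_mono: "G \<subseteq> H \<Longrightarrow> ideal_gen G \<subseteq> ideal_gen H"
  unfolding ideal_gen_def by auto

lemma Inter_ideal: "\<forall>I\<in>A. is_ideal I \<Longrightarrow> is_ideal (\<Inter>A)"
  unfolding is_ideal_def by auto

lemma ideal_sum_ideal:
  fixes I J :: "('v, 'k::field) mpoly set"
  assumes "is_ideal I" "is_ideal J" shows "is_ideal (ideal_sum I J)"
  unfolding is_ideal_def ideal_sum_def
proof (intro conjI ballI allI)
  show "0 \<in> {a + b |a b. a \<in> I \<and> b \<in> J}" using assms unfolding is_ideal_def by force
next
  fix x y assume "x \<in> {a + b |a b. a \<in> I \<and> b \<in> J}" "y \<in> {a + b |a b. a \<in> I \<and> b \<in> J}"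
  then obtain a b c d where "x = a + b" "y = c + d" "a \<in> I" "b \<in> J" "c \<in> I" "d \<in> J" by auto
  moreover have "x + y = (a + c) + (b + d)" using \<open>x = a + b\<close> \<open>y = c + d\<close> by (simp add: algebra_simps)
  ultimately show "x + y \<in> {a + b |a b. a \<in> I \<and> b \<in> J}" using assms unfolding is_ideal_def by blast
next
  fix x r assume "x \<in> {a + b |a b. a \<in> I \<and> b \<in> J}"
  then obtain a b where "x = a + b" "a \<in> I" "b \<in> J" by auto
  moreover have "r * x = r * a + r * b" using \<open>x = a + b\<close> by (simp add: algebra_simps)
  ultimately show "r * x \<in> {a + b |a b. a \<in> I \<and> b \<in> J}" using assms unfolding is_ideal_def by blast
qed

lemma ideal_sum_least:
  assumes "is_ideal K" "I \<subseteq> K" "J \<subseteq> K" shows "ideal_sum I J \<subseteq> K"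
  using assms unfolding ideal_sum_def is_ideal_def by blast

lemma ideal_sum_left: "is_ideal J \<Longrightarrow> I \<subseteq> ideal_sum I J"
  unfolding ideal_sum_def is_ideal_def by force

lemma ideal_sum_right: "is_ideal I \<Longrightarrow> J \<subseteq> ideal_sum I J"
  unfolding ideal_sum_def is_ideal_def by force

lemma ideal_sum_mono: "J \<subseteq> J' \<Longrightarrow> ideal_sum I J \<subseteq> ideal_sum I J'"
  unfolding ideal_sum_def by blast

lemma init_mono: "I \<subseteq> I' \<Longrightarrow> init_ideal le I \<subseteq> init_ideal le I'"
  unfolding init_ideal_def by (rule ideal_gen_mono) blast

lemma init_ideal_ideal: "is_ideal (init_ideal le I)"
  unfolding init_ideal_def by (rule ideal_gen_ideal)

lemma init_monomial: "is_monomial_ideal (init_ideal le I)"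
  unfolding init_ideal_def is_monomial_ideal_def
  apply (rule exI[of _ "{lead_mon le f | f. f \<in> I \<and> f \<noteq> 0}"])
  apply (rule arg_cong[where f=ideal_gen])
  by blast

lemma monomial_ideal_ideal: "is_monomial_ideal I \<Longrightarrow> is_ideal I"
  unfolding is_monomial_ideal_def using ideal_gen_ideal by blast

lemma monomial_terms:
  fixes I :: "('v, 'k::field) mpoly set"
  assumes "is_monomial_ideal I" "p \<in> I" "m \<in> Poly_Mapping.keys p"
  shows "Poly_Mapping.single m 1 \<in> I"
proof -
  obtain M where M: "I = ideal_gen ((\<lambda>m. Poly_Mapping.single m (1::'k)) ` M)"
    using assms(1) unfolding is_monomial_ideal_def by blast
  have II: "is_ideal I" using M ideal_gen_ideal by blast
  define T where "T = {q::('v, 'k) mpoly. \<forall>k\<in>Poly_Mapping.keys q. Poly_Mapping.single k 1 \<in> I}"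
  have "is_ideal T"
    unfolding is_ideal_def
  proof (intro conjI ballI allI)
    show "0 \<in> T" unfolding T_def by simp
  next
    fix a b assume "a \<in> T" "b \<in> T"
    then show "a + b \<in> T" unfolding T_def using keys_add[of a b] by blast
  next
    fix a r assume a: "a \<in> T"
    show "r * a \<in> T" unfolding T_def mem_Collect_eq
    proof
      fix k assume "k \<in> Poly_Mapping.keys (r * a)"
      then obtain k1 k2 where k: "k = k1 + k2" "k2 \<in> Poly_Mapping.keys a"
        using keys_mult[of r a] by blast
      have "Poly_Mapping.single k2 1 \<in> I" using a k unfolding T_def by blast
      then have "Poly_Mapping.single k1 1 * Poly_Mapping.single k2 1 \<in> I"
        using II unfolding is_ideal_def by blast
      then show "Poly_Mapping.single k (1::'k) \<in> I" by (simp add: mult_single k)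
    qed
  qed
  moreover have "(\<lambda>m. Poly_Mapping.single m (1::'k)) ` M \<subseteq> T"
    unfolding T_def using M ideal_gen_sup by fastforce
  ultimately have "I \<subseteq> T" using M ideal_gen_least by blast
  then show ?thesis using assms unfolding T_def by blast
qed

lemma sum_keys_expand:
  fixes p :: "('a \<Rightarrow>\<^sub>0 'b::comm_monoid_add)"
  shows "p = (\<Sum>k\<in>Poly_Mapping.keys p. Poly_Mapping.single k (Poly_Mapping.lookup p k))"
proof -
  have *: "finite A \<Longrightarrow> Poly_Mapping.lookup (\<Sum>k\<in>A. Poly_Mapping.single k (Poly_Mapping.lookup p k)) j =
            (if j \<in> A then Poly_Mapping.lookup p j else 0)" for A j
    by (induction A rule: finite_induct) (auto simp: lookup_single lookup_add when_def)
  show ?thesis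
    by (rule poly_mapping_eqI) (simp add: * in_keys_iff)
qed

lemma terms_in_ideal:
  fixes I :: "('v, 'k::field) mpoly set"
  assumes "is_ideal I" "\<forall>k\<in>Poly_Mapping.keys p. Poly_Mapping.single k 1 \<in> I"
  shows "p \<in> I"
proof -
  have "finite B \<Longrightarrow> B \<subseteq> Poly_Mapping.keys p \<Longrightarrow> (\<Sum>k\<in>B. Poly_Mapping.single k (Poly_Mapping.lookup p k)) \<in> I" for B
  proof (induction B rule: finite_induct)
    case empty then show ?case using assms unfolding is_ideal_def by simp
  next
    case (insert x F)
    have "Poly_Mapping.single 0 (Poly_Mapping.lookup p x) * Poly_Mapping.single x 1 \<in> I"
      using assms insert.prems unfolding is_ideal_def by blast
    then have "Poly_Mapping.single x (Poly_Mapping.lookup p x) \<in> I" by (simp add: mult_single)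
    then show ?case using insert assms unfolding is_ideal_def by simp
  qed
  then show ?thesis using sum_keys_expand[of p] by (metis order_refl finite_keys)
qed

lemma mo_facts:
  assumes "monomial_order le"
  shows "le a a" "le a b \<Longrightarrow> le b a \<Longrightarrow> a = b" "le a b \<Longrightarrow> le b c \<Longrightarrow> le a c" "le a b \<or> le b a"
  using assms unfolding monomial_order_def by blast+

lemma max_exists:
  assumes mo: "monomial_order le" and "finite A" "A \<noteq> {}"
  shows "\<exists>m\<in>A. \<forall>m'\<in>A. le m' m"
  using assms(2,3)
proof (induction A rule: finite_ne_induct)
  case (singleton x) then show ?case using mo_facts(1)[OF mo] by auto
next
  case (insert x F)
  then obtain m where m: "m \<in> F" "\<forall>m'\<in>F. le m' m" by blast
  show ?case
  proof (cases "le x m")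
    case True then show ?thesis using m by auto
  next
    case False
    then have "le m x" using mo_facts(4)[OF mo, of x m] by blast
    then have "\<forall>m'\<in>insert x F. le m' x" using m mo_facts(1,3)[OF mo] by blast
    then show ?thesis by blast
  qed
qed

lemma lead_mon_keys:
  assumes mo: "monomial_order le" and "f \<noteq> 0"
  shows "lead_mon le f \<in> Poly_Mapping.keys f"
proof -
  obtain m where m: "m \<in> Poly_Mapping.keys f" "\<forall>m'\<in>Poly_Mapping.keys f. le m' m"
    using max_exists[OF mo finite_keys[of f]] assms(2) by auto
  have u: "m2 = m" if "m2 \<in> Poly_Mapping.keys f \<and> (\<forall>m'\<in>Poly_Mapping.keys f. le m' m2)" for m2
  proof -
    have "le m m2" "le m2 m" using that m by auto
    then show ?thesis using mo_facts(2)[OF mo] by blast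
  qed
  have "lead_mon le f = m" unfolding lead_mon_def
    by (rule the_equality) (use m u in blast)+
  then show ?thesis using m by simp
qed

lemma lead_mon_single:
  assumes mo: "monomial_order le"
  shows "lead_mon le (Poly_Mapping.single m (1::'k::field)) = m"
  unfolding lead_mon_def keys_single using mo_facts(1)[OF mo] by (intro the_equality) auto

lemma init_sub_monomial:
  assumes mo: "monomial_order le" and "is_monomial_ideal F"
  shows "init_ideal le F \<subseteq> F"
  unfolding init_ideal_def
  using assms monomial_ideal_ideal[OF assms(2)] lead_mon_keys[OF mo] monomial_terms
  by (intro ideal_gen_least) blast+

lemma single_in_init:
  assumes mo: "monomial_order le" and "Poly_Mapping.single m (1::'k::field) \<in> I"
  shows "Poly_Mapping.single m 1 \<in> init_ideal le I"
proof -
  have "Poly_Mapping.single m (1::'k) \<in> {Poly_Mapping.single (lead_mon le f) 1 | f. f \<in> I \<and> f \<noteq> 0}"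
  proof -
    have nz: "Poly_Mapping.single m (1::'k) \<noteq> 0"
    proof
      assume "Poly_Mapping.single m (1::'k) = 0"
      then have "Poly_Mapping.keys (Poly_Mapping.single m (1::'k)) = {}" by simp
      then show False by simp
    qed
    have e: "Poly_Mapping.single m (1::'k) = Poly_Mapping.single (lead_mon le (Poly_Mapping.single m (1::'k))) 1"
      by (subst lead_mon_single[OF mo]) (rule refl)
    show ?thesis unfolding mem_Collect_eq
      by (rule exI[of _ "Poly_Mapping.single m 1"]) (intro conjI e assms(2) nz)
  qed
  then show ?thesis unfolding init_ideal_def by (rule subsetD[OF ideal_gen_sup])
qed

lemma sum_monomial_single:
  fixes A B :: "('v, 'k::field) mpoly set"
  assumes "is_monomial_ideal A" "is_monomial_ideal B" "Poly_Mapping.single m 1 \<in> ideal_sum A B"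
  shows "Poly_Mapping.single m 1 \<in> A \<or> Poly_Mapping.single m 1 \<in> B"
proof -
  have "\<exists>a b. Poly_Mapping.single m 1 = a + b \<and> a \<in> A \<and> b \<in> B"
    using assms(3) unfolding ideal_sum_def by (simp only: mem_Collect_eq)
  then obtain a b where ab: "Poly_Mapping.single m 1 = a + b" "a \<in> A" "b \<in> B"
    by (elim exE conjE)
  have "m \<in> Poly_Mapping.keys (Poly_Mapping.single m (1::'k))" by simp
  then have "m \<in> Poly_Mapping.keys (a + b)" by (simp only: ab(1))
  then have "m \<in> Poly_Mapping.keys a \<union> Poly_Mapping.keys b" by (rule subsetD[OF keys_add])
  then show ?thesis
  proof
    assume "m \<in> Poly_Mapping.keys a"
    then have "Poly_Mapping.single m 1 \<in> A" by (rule monomial_terms[OF assms(1) ab(2)])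
    then show ?thesis ..
  next
    assume "m \<in> Poly_Mapping.keys b"
    then have "Poly_Mapping.single m 1 \<in> B" by (rule monomial_terms[OF assms(2) ab(3)])
    then show ?thesis ..
  qed
qed

theorem mainTheorem11:
  fixes le :: "('v::finite \<Rightarrow>\<^sub>0 nat) \<Rightarrow> ('v \<Rightarrow>\<^sub>0 nat) \<Rightarrow> bool"
    and J E :: "('v, 'k::field) mpoly set"
  assumes "monomial_order le"
    and "is_ideal J"
    and "is_monomial_ideal E"
  shows "G_nice le J (Gnice_closure le J E)
    \<and> (Em_family le J E \<noteq> {} \<longrightarrow>
         Gnice_closure le J E \<in> Em_family le J E
         \<and> (\<forall>F\<in>Em_family le J E. Gnice_closure le J E \<subseteq> F))"
proof -
  note mo = assms(1)
  define Fam where "Fam = {F. is_monomial_ideal F \<and> E \<subseteq> F \<and> G_nice le J F}"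
  define C where "C = Gnice_closure le J E"
  have C: "C = \<Inter>Fam" unfolding C_def Fam_def Gnice_closure_def by (rule refl)
  have FamD: "is_monomial_ideal F" "E \<subseteq> F" "G_nice le J F" if "F \<in> Fam" for F
    using that unfolding Fam_def by simp_all
  have CF: "C \<subseteq> F" if "F \<in> Fam" for F
    unfolding C using that by (rule Inter_lower)
  have Cid: "is_ideal C" unfolding C
    by (rule Inter_ideal) (use FamD(1) monomial_ideal_ideal in blast)
  have keyC: "Poly_Mapping.single k 1 \<in> C" if p: "p \<in> C" and k: "k \<in> Poly_Mapping.keys p" for p k
    unfolding C
  proof (rule InterI)
    fix F assume F: "F \<in> Fam"
    have "p \<in> F" using CF[OF F] p by (rule subsetD)
    then show "Poly_Mapping.single k 1 \<in> F" using FamD(1)[OF F] k monomial_terms by blast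
  qed
  have gen: "Poly_Mapping.single (lead_mon le f) 1 \<in> ideal_sum (init_ideal le J) (init_ideal le C)"
    if f: "f \<in> ideal_sum J C" "f \<noteq> 0" for f
  proof (cases "Poly_Mapping.single (lead_mon le f) 1 \<in> init_ideal le J")
    case True
    then show ?thesis by (rule subsetD[OF ideal_sum_left[OF init_ideal_ideal]])
  next
    case False
    have "Poly_Mapping.single (lead_mon le f) 1 \<in> F" if FF: "F \<in> Fam" for F
    proof -
      have "f \<in> ideal_sum J F" using ideal_sum_mono[OF CF[OF FF]] f(1) by (rule subsetD)
      then have "Poly_Mapping.single (lead_mon le f) 1 \<in> {Poly_Mapping.single (lead_mon le f) 1 |f. f \<in> ideal_sum J F \<and> f \<noteq> 0}"
        using f(2) by blast
      then have "Poly_Mapping.single (lead_mon le f) 1 \<in> init_ideal le (ideal_sum J F)"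
        unfolding init_ideal_def by (rule subsetD[OF ideal_gen_sup])
      then have "Poly_Mapping.single (lead_mon le f) 1 \<in> ideal_sum (init_ideal le J) (init_ideal le F)"
        using FamD(3)[OF FF] unfolding G_nice_def by simp
      then have "Poly_Mapping.single (lead_mon le f) 1 \<in> init_ideal le J \<or> Poly_Mapping.single (lead_mon le f) 1 \<in> init_ideal le F"
        by (rule sum_monomial_single[OF init_monomial init_monomial])
      then have "Poly_Mapping.single (lead_mon le f) 1 \<in> init_ideal le F" using False by simp
      then show ?thesis by (rule subsetD[OF init_sub_monomial[OF mo FamD(1)[OF FF]]])
    qed
    then have "Poly_Mapping.single (lead_mon le f) 1 \<in> C" unfolding C by (rule InterI)
    then have "Poly_Mapping.single (lead_mon le f) 1 \<in> init_ideal le C" by (rule single_in_init[OF mo])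
    then show ?thesis by (rule subsetD[OF ideal_sum_right[OF init_ideal_ideal]])
  qed
  have gn: "G_nice le J C"
    unfolding G_nice_def
  proof
    show "init_ideal le (ideal_sum J C) \<subseteq> ideal_sum (init_ideal le J) (init_ideal le C)"
      unfolding init_ideal_def[of le "ideal_sum J C"]
    proof (rule ideal_gen_least)
      show "is_ideal (ideal_sum (init_ideal le J) (init_ideal le C))"
        by (intro ideal_sum_ideal init_ideal_ideal)
      show "{Poly_Mapping.single (lead_mon le f) 1 |f. f \<in> ideal_sum J C \<and> f \<noteq> 0}
             \<subseteq> ideal_sum (init_ideal le J) (init_ideal le C)"
        using gen by blast
    qed
  next
    have 1: "init_ideal le J \<subseteq> init_ideal le (ideal_sum J C)"
      by (rule init_mono) (rule ideal_sum_left[OF Cid])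
    have 2: "init_ideal le C \<subseteq> init_ideal le (ideal_sum J C)"
      by (rule init_mono) (rule ideal_sum_right[OF assms(2)])
    show "ideal_sum (init_ideal le J) (init_ideal le C) \<subseteq> init_ideal le (ideal_sum J C)"
      using ideal_sum_least[OF init_ideal_ideal 1 2] .
  qed
  define G where "G = (\<lambda>m. Poly_Mapping.single m (1::'k)) ` {m. Poly_Mapping.single m 1 \<in> C}"
  have mono: "is_monomial_ideal C"
  proof -
    have "C = ideal_gen G"
    proof
      have "G \<subseteq> C" unfolding G_def by blast
      then show "ideal_gen G \<subseteq> C" by (rule ideal_gen_least[OF Cid])
      show "C \<subseteq> ideal_gen G"
      proof
        fix p assume p: "p \<in> C"
        have "\<forall>k\<in>Poly_Mapping.keys p. Poly_Mapping.single k 1 \<in> ideal_gen G"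
        proof
          fix k assume "k \<in> Poly_Mapping.keys p"
          then have "Poly_Mapping.single k 1 \<in> C" by (rule keyC[OF p])
          then have "Poly_Mapping.single k 1 \<in> G" unfolding G_def by blast
          then show "Poly_Mapping.single k 1 \<in> ideal_gen G" by (rule subsetD[OF ideal_gen_sup])
        qed
        then show "p \<in> ideal_gen G" by (rule terms_in_ideal[OF ideal_gen_ideal])
      qed
    qed
    then show ?thesis unfolding is_monomial_ideal_def G_def by blast
  qed
  have EC: "E \<subseteq> C" unfolding C using FamD(2) by blast
  have sub: "Em_family le J E \<subseteq> Fam" unfolding Em_family_def Fam_def by blast
  show ?thesis
    unfolding C_def[symmetric]
  proof (intro conjI impI)
    show "G_nice le J C" by (rule gn)
    assume "Em_family le J E \<noteq> {}"
    then obtain F0 where F0: "F0 \<in> Em_family le J E" by blast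
    have "C \<subseteq> F0" using F0 sub CF by blast
    have s1: "ideal_sum J E \<subseteq> ideal_sum J C" using EC by (rule ideal_sum_mono)
    have s2: "ideal_sum J C \<subseteq> ideal_sum J F0" using \<open>C \<subseteq> F0\<close> by (rule ideal_sum_mono)
    have s3: "ideal_sum J E = ideal_sum J F0" using F0 unfolding Em_family_def by simp
    have "ideal_sum J E = ideal_sum J C" using s1 s2 s3 by (rule_tac equalityI) auto
    then show "C \<in> Em_family le J E" unfolding Em_family_def using mono EC gn by simp
    show "\<forall>F\<in>Em_family le J E. C \<subseteq> F" using sub CF by blast
  qed
qed

end
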